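(* For $(n,m) \in \mathbb{Z}^2$ let $q_{(n,m)}(x) = x^4 + n x^3 + m x^2 + n x + 1$, and let $Q = \{(n,m) \in \mathbb{Z}^2 : q_{(n,m)} \text{ has no real root}\}$. Then there exists a finite set $\tilde{Q} \subseteq \mathbb{Z}^2$ such that for every $(n,m) \in Q \setminus \tilde{Q}$ one has $n^2 - 4m + 8 \le 0$. *)

theory Defs
  imports Complex_Main
begin

definition q :: "int \<times> int \<Rightarrow> real \<Rightarrow> real" where
  "q nm x = (case nm of (n, m) \<Rightarrow> x ^ 4 + of_int n * x ^ 3 + of_int m * x ^ 2 + of_int n * x + 1)"

definition Q :: "(int \<times> int) set" where
  "Q = {nm. \<not> (\<exists>x::real. q nm x = 0)}"

end

theory Submission
  imports Defs
begin

lemma root_from_y: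
  fixes y :: real
  assumes "\<bar>y\<bar> \<ge> 2" "y^2 + of_int n * y + of_int m - 2 = 0"
  shows "\<exists>x. q (n, m) x = 0"
proof -
  define x where "x = (y + sqrt (y^2 - 4)) / 2"
  have h: "y^2 - 4 \<ge> 0" using power_mono[OF assms(1), of 2] by simp
  have s: "(sqrt (y^2 - 4))^2 = y^2 - 4" using h by simp
  have "x^2 - y*x + 1 = 0" unfolding x_def using s
    by (simp add: power2_eq_square field_simps)
  moreover have "q (n, m) x = (x^2 - y*x + 1) * (x^2 + (of_int n + y)*x + 1)"
  proof -
    have "q (n, m) x = (x^2 - y*x + 1) * (x^2 + (of_int n + y)*x + 1) + x^2 * (y^2 + of_int n * y + of_int m - 2)"
      unfolding q_def by (simp add: algebra_simps power2_eq_square power3_eq_cube power4_eq_xxxx)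
    then show ?thesis using assms(2) by simp
  qed
  ultimately show ?thesis by auto
qed

lemma key:
  assumes "(n, m) \<in> Q" "n^2 - 4*m + 8 > 0"
  shows "\<bar>n\<bar> \<le> 3 \<and> m \<ge> -1 \<and> m \<le> 5"
proof -
  define D :: real where "D = of_int (n^2 - 4*m + 8)"
  have D0: "D > 0" using assms(2) unfolding D_def by (simp only: of_int_0_less_iff)
  define s where "s = sqrt D"
  have s2: "s^2 = D" using D0 unfolding s_def by simp
  define y1 where "y1 = (- of_int n + s)/2"
  define y2 where "y2 = (- of_int n - s)/2"
  have nr: "\<not> (\<exists>x. q (n, m) x = 0)" using assms(1) unfolding Q_def by simp
  have e1: "y1^2 + of_int n * y1 + of_int m - 2 = 0"
    unfolding y1_def using s2 unfolding D_def by (simp add: power2_eq_square field_simps)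
  have e2: "y2^2 + of_int n * y2 + of_int m - 2 = 0"
    unfolding y2_def using s2 unfolding D_def by (simp add: power2_eq_square field_simps)
  have a1: "\<bar>y1\<bar> < 2" using root_from_y[OF _ e1] nr by force
  have a2: "\<bar>y2\<bar> < 2" using root_from_y[OF _ e2] nr by force
  have sn: "of_int n = - (y1 + y2)" unfolding y1_def y2_def by (simp add: field_simps)
  have sm: "of_int m - 2 = y1 * y2"
    unfolding y1_def y2_def using s2 unfolding D_def by (simp add: power2_eq_square field_simps)
  have "\<bar>y1 * y2\<bar> < 4" using mult_strict_mono[OF a1 a2] by (simp add: abs_mult)
  then have "real_of_int m < 6" "real_of_int m > -2" using sm by linarith+
  moreover have "\<bar>real_of_int n\<bar> < 4" using sn a1 a2 by linarith
  ultimately show ?thesis by linarith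
qed

theorem lemmaA1:
  shows "\<exists>Qt :: (int \<times> int) set. finite Qt \<and>
           (\<forall>n m. (n, m) \<in> Q - Qt \<longrightarrow> n ^ 2 - 4 * m + 8 \<le> 0)"
proof (intro exI conjI allI impI)
  show "finite ({-3..3} \<times> {-1..5} :: (int \<times> int) set)" by simp
  fix n m :: int
  assume h: "(n, m) \<in> Q - {-3..3} \<times> {-1..5}"
  show "n ^ 2 - 4 * m + 8 \<le> 0"
  proof (rule ccontr)
    assume "\<not> ?thesis"
    then have "\<bar>n\<bar> \<le> 3 \<and> m \<ge> -1 \<and> m \<le> 5" using key h by force
    then show False using h by auto
  qed
qed

end
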